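(* Let $G$ be a graph such that $D_2(G)$ is connected. Then $\mathrm{diam}(D_2(G))\geqslant \left\lceil \tfrac{1}{2}\mathrm{diam}(G)\right\rceil$.
   Context: All graphs are finite, simple and undirected. For a graph $G$, $\mathrm{d}_G(x,y)$ denotes the length of a shortest path between $x$ and $y$, and $\mathrm{diam}(G)$ is the maximum distance between vertices of $G$. The $2$-distance graph $D_2(G)$ of $G$ is the graph with vertex set $V(G)$ in which two vertices $x,y$ are adjacent if and only if $\mathrm{d}_G(x,y)=2$. *)

theory Defs
  imports Main "HOL-Library.Extended_Nat"
begin

definition simple_graph :: "'a set \<Rightarrow> ('a \<Rightarrow> 'a \<Rightarrow> bool) \<Rightarrow> bool" where
  "simple_graph V E \<longleftrightarrow> finite V \<and> (\<forall>x y. E x y \<longrightarrow> x \<in> V \<and> y \<in> V)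
     \<and> (\<forall>x y. E x y \<longrightarrow> E y x) \<and> (\<forall>x. \<not> E x x)"

text \<open>Distance: length of a shortest walk (= shortest path); infinity if none.\<close>
definition gdist :: "('a \<Rightarrow> 'a \<Rightarrow> bool) \<Rightarrow> 'a \<Rightarrow> 'a \<Rightarrow> enat" where
  "gdist E x y = (INF n \<in> {n. (E ^^ n) x y}. enat n)"

definition gdiam :: "'a set \<Rightarrow> ('a \<Rightarrow> 'a \<Rightarrow> bool) \<Rightarrow> enat" where
  "gdiam V E = (SUP x \<in> V. SUP y \<in> V. gdist E x y)"

definition D2 :: "'a set \<Rightarrow> ('a \<Rightarrow> 'a \<Rightarrow> bool) \<Rightarrow> 'a \<Rightarrow> 'a \<Rightarrow> bool" where
  "D2 V E x y \<longleftrightarrow> x \<in> V \<and> y \<in> V \<and> gdist E x y = 2"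

definition gconnected :: "'a set \<Rightarrow> ('a \<Rightarrow> 'a \<Rightarrow> bool) \<Rightarrow> bool" where
  "gconnected V E \<longleftrightarrow> V \<noteq> {} \<and> (\<forall>x\<in>V. \<forall>y\<in>V. E\<^sup>*\<^sup>* x y)"

end

theory Submission
  imports Defs
begin

lemma gdist_least:
  assumes "(E ^^ n) x y"
  shows "gdist E x y = enat (LEAST n. (E ^^ n) x y)"
proof (rule antisym)
  show "gdist E x y \<le> enat (LEAST n. (E ^^ n) x y)"
  proof -
    have "(E ^^ (LEAST n. (E ^^ n) x y)) x y" using assms by (rule LeastI)
    then show ?thesis unfolding gdist_def by (intro INF_lower) simp
  qed
  show "enat (LEAST n. (E ^^ n) x y) \<le> gdist E x y"
    unfolding gdist_def by (rule INF_greatest) (simp add: Least_le)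
qed

lemma gdist_le:
  assumes "(E ^^ n) x y"
  shows "gdist E x y \<le> enat n"
  unfolding gdist_def using assms by (intro INF_lower) simp

lemma gdist_2:
  assumes "gdist E x y = 2"
  shows "(E ^^ 2) x y"
proof -
  have "{n. (E ^^ n) x y} \<noteq> {}"
  proof
    assume "{n. (E ^^ n) x y} = {}"
    then have "gdist E x y = top" unfolding gdist_def by simp
    with assms show False by (simp add: top_enat_def)
  qed
  then obtain n where n: "(E ^^ n) x y" by auto
  from gdist_least[OF n] assms have "(LEAST n. (E ^^ n) x y) = 2"
    by (simp add: numeral_eq_enat)
  with LeastI[of "\<lambda>n. (E ^^ n) x y", OF n] show ?thesis by simp
qed

lemma D2_pow:
  assumes "(D2 V E ^^ k) x y"
  shows "(E ^^ (2*k)) x y"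
  using assms
proof (induction k arbitrary: y)
  case 0 then show ?case by simp
next
  case (Suc k)
  then obtain z where z: "(D2 V E ^^ k) x z" "D2 V E z y" by auto
  have a: "(E ^^ (2*k)) x z" using Suc.IH z(1) .
  have b: "(E ^^ 2) z y" using z(2) unfolding D2_def by (intro gdist_2[of E z y]) simp
  have "(E ^^ (2*k + 2)) x y" unfolding relpowp_add using a b by blast
  then show ?case by (simp add: mult_2)
qed

theorem theorem2p5:
  fixes V :: "'a set" and E :: "'a \<Rightarrow> 'a \<Rightarrow> bool"
  assumes "simple_graph V E"
    and "gconnected V (D2 V E)"
  shows "enat (nat \<lceil>real (the_enat (gdiam V E)) / 2\<rceil>) \<le> gdiam V (D2 V E)"
proof -
  have pair: "gdist E x y \<le> 2 * gdiam V (D2 V E)" if xy: "x \<in> V" "y \<in> V" for x y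
  proof -
    have "(D2 V E)\<^sup>*\<^sup>* x y" using assms(2) xy unfolding gconnected_def by blast
    then obtain k where k: "(D2 V E ^^ k) x y" by (auto simp: rtranclp_power)
    define m where "m = (LEAST k. (D2 V E ^^ k) x y)"
    have mk: "(D2 V E ^^ m) x y" unfolding m_def using k by (rule LeastI)
    have "gdist (D2 V E) x y = enat m" unfolding m_def by (rule gdist_least[OF k])
    moreover have "gdist (D2 V E) x y \<le> gdiam V (D2 V E)"
      unfolding gdiam_def using xy by (meson SUP_upper2 order_refl)
    ultimately have "enat m \<le> gdiam V (D2 V E)" by simp
    moreover have "gdist E x y \<le> enat (2*m)" by (rule gdist_le[OF D2_pow[OF mk]])
    ultimately show ?thesis
      by (metis dual_order.trans enat_numeral mult_left_mono times_enat_simps(1) zero_le)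
  qed
  have main: "gdiam V E \<le> 2 * gdiam V (D2 V E)"
    unfolding gdiam_def[of V E] using pair by (simp add: SUP_least)
  show ?thesis
  proof (cases "gdiam V (D2 V E)")
    case infinity then show ?thesis by simp
  next
    case (enat m)
    with main obtain d where d: "gdiam V E = enat d" "d \<le> 2*m"
      by (metis enat_ile enat_numeral times_enat_simps(1) enat_ord_simps(1))
    have "nat \<lceil>real d / 2\<rceil> \<le> m"
    proof -
      have "real d / 2 \<le> real m" using d(2) by simp
      then have "\<lceil>real d / 2\<rceil> \<le> int m"
        by (metis ceiling_mono ceiling_of_nat)
      then show ?thesis using nat_le_iff by blast
    qed
    then show ?thesis using d enat by simp
  qed
qed

end
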